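(* For all $n,k\in\mathbb Z$, \[ \binom nk_{a,b;q,p}=\binom{n}{n-k}_{b,a;q,p}\prod_{j=1}^kW_{a,b;q,p}(j,n-k) =(-1)^{n-k}\operatorname{sgn}(n-k)\binom{-k-1}{-n-1}_{a/b,1/b;q,p}\prod_{j=1}^{n-k}W_{a,b;q,p}(n+1-j,j)^{-1} =(-1)^k\operatorname{sgn}(k)\binom{k-n-1}{k}_{1/a,b/a;q,p}\prod_{j=1}^kW_{a,b;q,p}(j,-j). \]
   Context: Let $a,b,q,p\in\mathbb C$ with $|p|<1$, generic so that all theta functions below that appear in denominators are nonzero. $\theta(x;p)=\prod_{j\ge0}(1-p^jx)(1-p^{j+1}/x)$ and $\theta(x_1,\dots,x_\ell;p)=\prod_i\theta(x_i;p)$. $\operatorname{sgn}(n)=1$ for $n\ge0$, $-1$ for $n<0$. Product convention: $\prod_{j=l}^m A_j=A_l\cdots A_m$ if $m>l-1$, $=1$ if $m=l-1$, $=A_{l-1}^{-1}\cdots A_{m+1}^{-1}$ if $m<l-1$. Elliptic weights: $w_{a,b;q,p}(s,t)=\frac{\theta(aq^{s+2t},bq^{2s+t-2},aq^{t-s-1}/b;p)}{\theta(aq^{s+2t-2},bq^{2s+t},aq^{t-s+1}/b;p)}\,q$ and $W_{a,b;q,p}(s,t)=\prod_{j=1}^t w_{a,b;q,p}(s,j)=\frac{\theta(aq^{s+2t},bq^{2s},bq^{2s-1},aq^{1-s}/b,aq^{-s}/b;p)}{\theta(aq^s,bq^{2s+t},bq^{2s+t-1},aq^{1+t-s}/b,aq^{t-s}/b;p)}q^t$.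 The elliptic binomial coefficients $\binom nk_{a,b;q,p}$ ($n,k\in\mathbb Z$) are the unique family with $\binom n0_{a,b;q,p}=\binom nn_{a,b;q,p}=1$ for all $n$ and $\binom{n+1}{k}_{a,b;q,p}=\binom nk_{a,b;q,p}+\binom n{k-1}_{a,b;q,p}W_{a,b;q,p}(k,n+1-k)$ whenever $(n+1,k)\ne(0,0)$; in closed form $\binom nk_{a,b;q,p}=\frac{(q^{1+k},aq^{1+k},bq^{1+k},aq^{1-k}/b;q,p)_{n-k}}{(q,aq,bq^{1+2k},aq/b;q,p)_{n-k}}$ with $(x;q,p)_r=\prod_{i=0}^{r-1}\theta(xq^i;p)$ (product convention) and $(x_1,\dots,x_\ell;q,p)_r=\prod_i(x_i;q,p)_r$. The coefficients with other parameter pairs, e.g. $\binom{\cdot}{\cdot}_{b,a;q,p}$, are defined in the same way with $(a,b)$ replaced accordingly. *)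

theory Defs
  imports "HOL-Analysis.Analysis"
begin

definition etheta :: "complex \<Rightarrow> complex \<Rightarrow> complex" where
  "etheta x p = (\<Prod>j. (1 - p ^ j * x) * (1 - p ^ Suc j / x))"

definition isgn :: "int \<Rightarrow> complex" where
  "isgn n = (if n \<ge> 0 then 1 else -1)"

definition cprod :: "(int \<Rightarrow> complex) \<Rightarrow> int \<Rightarrow> int \<Rightarrow> complex" where
  "cprod A l m = (if m \<ge> l - 1 then (\<Prod>j\<in>{l..m}. A j)
                  else (\<Prod>j\<in>{m+1..l-1}. inverse (A j)))"

definition ew :: "complex \<Rightarrow> complex \<Rightarrow> complex \<Rightarrow> complex \<Rightarrow> int \<Rightarrow> int \<Rightarrow> complex" where
  "ew a b q p s t =
     (etheta (a * q powi (s + 2 * t)) p * etheta (b * q powi (2 * s + t - 2)) p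
        * etheta (a * q powi (t - s - 1) / b) p)
     / (etheta (a * q powi (s + 2 * t - 2)) p * etheta (b * q powi (2 * s + t)) p
        * etheta (a * q powi (t - s + 1) / b) p) * q"

definition eW :: "complex \<Rightarrow> complex \<Rightarrow> complex \<Rightarrow> complex \<Rightarrow> int \<Rightarrow> int \<Rightarrow> complex" where
  "eW a b q p s t = cprod (\<lambda>j. ew a b q p s j) 1 t"

definition ebinom :: "complex \<Rightarrow> complex \<Rightarrow> complex \<Rightarrow> complex \<Rightarrow> int \<Rightarrow> int \<Rightarrow> complex" where
  "ebinom a b q p = (THE f. (\<forall>n. f n 0 = 1 \<and> f n n = 1) \<and>
      (\<forall>n k. (n + 1, k) \<noteq> (0, 0) \<longrightarrow>
          f (n + 1) k = f n k + f n (k - 1) * eW a b q p k (n + 1 - k)))"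

end

theory Submission
  imports Defs
begin


lemma theta_conv:
  fixes p x :: complex
  assumes "norm p < 1"
  shows "convergent_prod (\<lambda>j. (1 - p ^ j * x) * (1 - p ^ Suc j / x))"
proof -
  let ?C = "norm x + norm p / norm x + norm p"
  have b: "norm ((1 - p ^ j * x) * (1 - p ^ Suc j / x) - 1) \<le> ?C * norm p ^ j" for j
  proof -
    have e0: "\<And>A B::complex. (1-A)*(1-B)-1 = -A - B + A*B" by (simp add: algebra_simps)
    have e: "(1 - p ^ j * x) * (1 - p ^ Suc j / x) - 1 = - (p ^ j * x) - p ^ Suc j / x + p^j * x * (p ^ Suc j / x)"
      by (rule e0)
    have "norm (p^j * x * (p ^ Suc j / x)) \<le> norm p ^ j * norm p"
    proof (cases "x = 0")
      case True then show ?thesis by simp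
    next
      case False
      have "norm (p^j * x * (p ^ Suc j / x)) = norm p ^ j * norm p ^ j * norm p"
        using False by (simp add: norm_mult norm_divide norm_power)
      also have "\<dots> \<le> norm p ^ j * 1 * norm p"
        using assms by (intro mult_right_mono mult_left_mono) (auto simp: power_le_one)
      finally show ?thesis by simp
    qed
    moreover have "norm (p ^ j * x) = norm p ^ j * norm x" by (simp add: norm_mult norm_power)
    moreover have "norm (p ^ Suc j / x) = norm p ^ j * (norm p / norm x)" by (simp add: norm_divide norm_power norm_mult)
    ultimately have "norm (- (p ^ j * x) - p ^ Suc j / x + p^j * x * (p ^ Suc j / x))
        \<le> norm p ^ j * norm x + norm p ^ j * (norm p / norm x) + norm p ^ j * norm p"
      by (smt (verit) norm_minus_cancel norm_triangle_ineq4 norm_triangle_ineq)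
    then show ?thesis unfolding e by (simp add: algebra_simps)
  qed
  have "summable (\<lambda>j. ?C * norm p ^ j)"
    using assms by (intro summable_mult summable_geometric) simp
  then have "summable (\<lambda>j. norm ((1 - p ^ j * x) * (1 - p ^ Suc j / x) - 1))"
    by (rule summable_comparison_test[rotated]) (use b in auto)
  then show ?thesis
    by (intro abs_convergent_prod_imp_convergent_prod summable_imp_abs_convergent_prod)
qed

lemma theta_partial:
  fixes p x :: complex
  shows "(\<Prod>j<N. (1 - p ^ j * (1/x)) * (1 - p ^ Suc j / (1/x))) * (1 - x) * (1 - p ^ N / x)
       = (\<Prod>j<N. (1 - p ^ j * x) * (1 - p ^ Suc j / x)) * (1 - 1 / x) * (1 - p ^ N * x)"
proof (induction N)
  case 0 then show ?case by simp
next
  case (Suc N)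
  have gen: "\<And>G F k0 h1 k1 h0 X Y::complex. G * X * k0 = F * Y * h0 \<Longrightarrow>
      (G * (k0 * h1)) * X * k1 = (F * (h0 * k1)) * Y * h1"
    by (metis mult.assoc mult.commute)
  have a: "(1 - p ^ N * (1/x)) = 1 - p^N / x" "1 - p ^ Suc N / (1/x) = 1 - p ^ Suc N * x"
     "(1 - p ^ Suc N * (1/x)) = 1 - p^ Suc N / x" by simp_all
  show ?case
    unfolding prod.lessThan_Suc a by (rule gen[OF Suc])
qed

lemma theta_inv:
  fixes p x :: complex
  assumes "norm p < 1" "x \<noteq> 0"
  shows "etheta (1 / x) p = - etheta x p / x"
proof -
  let ?f = "\<lambda>j. (1 - p ^ j * x) * (1 - p ^ Suc j / x)"
  let ?g = "\<lambda>j. (1 - p ^ j * (1/x)) * (1 - p ^ Suc j / (1/x))"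
  have pN: "(\<lambda>N. p ^ N) \<longlonglongrightarrow> 0" using assms(1) by (simp add: LIMSEQ_power_zero)
  have F: "(\<lambda>N. \<Prod>j<N. ?f j) \<longlonglongrightarrow> etheta x p"
    using convergent_prod_LIMSEQ[OF theta_conv[OF assms(1), of x]]
    unfolding etheta_def by (simp add: LIMSEQ_lessThan_iff_atMost)
  have G: "(\<lambda>N. \<Prod>j<N. ?g j) \<longlonglongrightarrow> etheta (1/x) p"
    using convergent_prod_LIMSEQ[OF theta_conv[OF assms(1), of "1/x"]]
    unfolding etheta_def by (simp only: LIMSEQ_lessThan_iff_atMost)
  have L1: "(\<lambda>N. (\<Prod>j<N. ?g j) * (1 - x) * (1 - p ^ N / x)) \<longlonglongrightarrow> etheta (1/x) p * (1 - x) * (1 - 0 / x)"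
    by (intro tendsto_intros G pN; use assms in simp)
  have L2: "(\<lambda>N. (\<Prod>j<N. ?f j) * (1 - 1/x) * (1 - p ^ N * x)) \<longlonglongrightarrow> etheta x p * (1 - 1/x) * (1 - 0 * x)"
    by (intro tendsto_intros F pN)
  have L1': "(\<lambda>N. (\<Prod>j<N. ?f j) * (1 - 1/x) * (1 - p ^ N * x)) \<longlonglongrightarrow> etheta (1/x) p * (1 - x) * (1 - 0 / x)"
    using L1 by (simp only: theta_partial)
  have E: "etheta (1/x) p * (1 - x) = etheta x p * (1 - 1/x)"
    using LIMSEQ_unique[OF L1' L2] by simp
  show ?thesis
  proof (cases "x = 1")
    case False
    then have nz: "1 - x \<noteq> 0" by simp
    have "(1 - 1/x) = (- 1 / x) * (1 - x)" using assms(2) by (simp add: field_simps)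
    with E have "etheta (1/x) p * (1 - x) = (- etheta x p / x) * (1 - x)" by simp
    then show ?thesis using mult_right_cancel[OF nz] by blast
  next
    case True
    have "(\<lambda>N. \<Prod>j<N. ?f j) \<longlonglongrightarrow> 0"
    proof (rule tendsto_eventually)
      show "\<forall>\<^sub>F N in sequentially. (\<Prod>j<N. ?f j) = 0"
        using eventually_ge_at_top[of "1::nat"]
      proof eventually_elim
        case (elim N)
        then have "0 \<in> {..<N}" by simp
        moreover have "?f 0 = 0" using True by simp
        ultimately show ?case by (meson finite_lessThan prod_zero)
      qed
    qed
    then have "etheta x p = 0" using F LIMSEQ_unique by blast
    then show ?thesis using True by simp
  qed
qed




lemma cprod_step:
  assumes nz: "\<And>j. A j \<noteq> 0"
  shows "cprod A l m = cprod A l (m - 1) * A m"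
proof -
  consider "l \<le> m" | "m = l - 1" | "m < l - 1" by linarith
  then show ?thesis
  proof cases
    case 1
    then have "{l..m} = insert m {l..m-1}" by auto
    then show ?thesis using 1 by (simp add: cprod_def mult.commute)
  next
    case 2
    then have "{m..l - 1} = {m}" by auto
    then show ?thesis using 2 nz by (simp add: cprod_def)
  next
    case 3
    then have "{m..l-1} = insert m {m+1..l-1}" by auto
    then show ?thesis using 3 nz by (simp add: cprod_def)
  qed
qed

lemma cprod_first:
  assumes nz: "\<And>j. A j \<noteq> 0"
  shows "cprod A l m = A l * cprod A (l + 1) m"
proof -
  consider "l \<le> m" | "m = l - 1" | "m < l - 1" by linarith
  then show ?thesis
  proof cases
    case 1
    then have "{l..m} = insert l {l+1..m}" by auto
    then show ?thesis using 1 by (simp add: cprod_def)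
  next
    case 2
    then have "{m + 1..l + 1 - 1} = {l}" by auto
    then show ?thesis using 2 nz by (simp add: cprod_def)
  next
    case 3
    then have "{m+1..l+1-1} = insert l {m+1..l-1}" by auto
    then show ?thesis using 3 nz by (simp add: cprod_def)
  qed
qed

lemma cprod_mult: "cprod (\<lambda>j. A j * B j) l m = cprod A l m * cprod B l m"
  by (simp add: cprod_def prod.distrib)

lemma cprod_one: "cprod (\<lambda>j. 1) l m = 1"
  by (simp add: cprod_def)

lemma cprod_inverse: "cprod (\<lambda>j. inverse (A j)) l m = inverse (cprod A l m)"
  using prod_inversef[of A, symmetric] prod_inversef[of "\<lambda>j. inverse (A j)"]
  by (simp add: cprod_def comp_def)

lemma cprod_nz: "(\<And>j. A j \<noteq> 0) \<Longrightarrow> cprod A l m \<noteq> 0"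
  by (simp add: cprod_def)

lemma cprod_shift: "cprod A l m = cprod (\<lambda>j. A (j + 1)) (l - 1) (m - 1)"
proof -
  have a: "(\<Prod>j\<in>{l..m}. A j) = (\<Prod>j\<in>{l-1..m-1}. A (j + 1))"
    by (rule prod.reindex_bij_witness[of _ "\<lambda>j. j + 1" "\<lambda>j. j - 1"]) auto
  have b: "(\<Prod>j\<in>{m+1..l-1}. inverse (A j)) = (\<Prod>j\<in>{m-1+1..l-1-1}. inverse (A (j + 1)))"
    by (rule prod.reindex_bij_witness[of _ "\<lambda>j. j + 1" "\<lambda>j. j - 1"]) auto
  show ?thesis unfolding cprod_def using a b by simp
qed

lemma cprod_reflect:
  assumes nz: "\<And>j. u j \<noteq> 0"
  shows "cprod u 1 (c - T) = cprod u 1 c * cprod (\<lambda>j. inverse (u (c + 1 - j))) 1 T"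
proof (induction T rule: int_induct[where k=0])
  case base then show ?case by (simp add: cprod_def)
next
  case (step1 i)
  have nz': "\<And>j. inverse (u (c + 1 - j)) \<noteq> 0" using nz by simp
  have "cprod u 1 (c - i) = cprod u 1 (c - (i + 1)) * u (c - i)"
    using cprod_step[OF nz, where l=1 and m="c - i"] by (simp add: algebra_simps)
  then have "cprod u 1 (c - (i + 1)) = cprod u 1 (c - i) * inverse (u (c - i))"
    using nz by (simp add: field_simps)
  also have "\<dots> = cprod u 1 c * (cprod (\<lambda>j. inverse (u (c + 1 - j))) 1 i * inverse (u (c + 1 - (i + 1))))"
    using step1 by simp
  also have "cprod (\<lambda>j. inverse (u (c + 1 - j))) 1 i * inverse (u (c + 1 - (i + 1)))
      = cprod (\<lambda>j. inverse (u (c + 1 - j))) 1 (i + 1)"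
    using cprod_step[OF nz', where l=1 and m="i + 1"] by simp
  finally show ?case .
next
  case (step2 i)
  have nz': "\<And>j. inverse (u (c + 1 - j)) \<noteq> 0" using nz by simp
  have "cprod u 1 (c - (i - 1)) = cprod u 1 (c - i) * u (c - i + 1)"
    using cprod_step[OF nz, where l=1 and m="c - i + 1"] by (simp add: algebra_simps)
  also have "\<dots> = cprod u 1 c * (cprod (\<lambda>j. inverse (u (c + 1 - j))) 1 i * u (c + 1 - i))"
    using step2 by (simp add: algebra_simps)
  also have "cprod (\<lambda>j. inverse (u (c + 1 - j))) 1 i * u (c + 1 - i)
      = cprod (\<lambda>j. inverse (u (c + 1 - j))) 1 (i - 1)"
    using cprod_step[OF nz', where l=1 and m=i] nz by (simp add: field_simps)
  finally show ?case .
qed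




definition recP :: "(int \<Rightarrow> int \<Rightarrow> complex) \<Rightarrow> (int \<Rightarrow> int \<Rightarrow> complex) \<Rightarrow> bool" where
  "recP W f \<longleftrightarrow> (\<forall>n. f n 0 = 1 \<and> f n n = 1) \<and>
      (\<forall>n k. (n + 1, k) \<noteq> (0, 0) \<longrightarrow> f (n + 1) k = f n k + f n (k - 1) * W k (n + 1 - k))"

definition inZ :: "int \<Rightarrow> int \<Rightarrow> bool" where
  "inZ n k \<longleftrightarrow> (0 \<le> n \<and> n < k) \<or> (n < k \<and> k \<le> -1) \<or> (k \<le> -1 \<and> 0 \<le> n)"

definition recC :: "(int \<Rightarrow> int \<Rightarrow> complex) \<Rightarrow> (int \<Rightarrow> int \<Rightarrow> complex) \<Rightarrow> bool" where
  "recC W f \<longleftrightarrow> (\<forall>n k. (n + 1, k) \<noteq> (0, 0) \<longrightarrow> f (n + 1) k = f n k + f n (k - 1) * W k (n + 1 - k))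
     \<and> (\<forall>n k. inZ n k \<longrightarrow> f n k = 0) \<and> f 0 0 = 1 \<and> f (-1) (-1) = 1 \<and> f (-1) 0 = 1"

definition goodW :: "(int \<Rightarrow> int \<Rightarrow> complex) \<Rightarrow> bool" where
  "goodW W \<longleftrightarrow> (\<forall>s t. W s t \<noteq> 0) \<and> (\<forall>s. W s 0 = 1)"

lemma const_int:
  fixes d :: "int \<Rightarrow> 'a"
  assumes "\<And>n. d (n + 1) = d n"
  shows "d n = d m"
proof (induction n rule: int_induct[where k=m])
  case base then show ?case by simp
next
  case (step1 i) then show ?case using assms by simp
next
  case (step2 i) then show ?case using assms[of "i - 1"] by simp
qed

lemma two_sided:
  fixes d :: "int \<Rightarrow> 'a"
  assumes "\<And>n. n \<noteq> -1 \<Longrightarrow> d (n + 1) = d n" "d 0 = c" "d (-1) = c"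
  shows "d n = c"
proof (cases "0 \<le> n")
  case True
  then show ?thesis
  proof (induction n rule: int_ge_induct)
    case base then show ?case using assms by simp
  next
    case (step i) then show ?case using assms(1)[of i] by simp
  qed
next
  case False
  then have "n \<le> -1" by simp
  then show ?thesis
  proof (induction n rule: int_le_induct)
    case base then show ?case using assms by simp
  next
    case (step i) then show ?case using assms(1)[of "i - 1"] by simp
  qed
qed

lemma int_cases_col:
  fixes k :: int
  assumes "\<And>j::nat. P (int j)" "\<And>j::nat. P (- int j - 1)"
  shows "P k"
proof (cases "0 \<le> k")
  case True then show ?thesis using assms(1)[of "nat k"] by simp
next
  case False then show ?thesis using assms(2)[of "nat (- k - 1)"] by simp
qed

lemma recP_unique:
  assumes W: "goodW W" and f: "recP W f" and g: "recP W g"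
  shows "f = g"
proof -
  have Wnz: "W s t \<noteq> 0" for s t using W by (simp add: goodW_def)
  have fr: "\<And>n k. (n + 1, k) \<noteq> (0, 0) \<Longrightarrow> f (n + 1) k = f n k + f n (k - 1) * W k (n + 1 - k)"
    and gr: "\<And>n k. (n + 1, k) \<noteq> (0, 0) \<Longrightarrow> g (n + 1) k = g n k + g n (k - 1) * W k (n + 1 - k)"
    and f0: "\<And>n. f n 0 = 1" and g0: "\<And>n. g n 0 = 1"
    and fd: "\<And>n. f n n = 1" and gd: "\<And>n. g n n = 1"
    using f g by (auto simp: recP_def)
  have pos: "\<forall>n. f n (int j) = g n (int j)" for j :: nat
  proof (induction j)
    case 0 then show ?case using f0 g0 by simp
  next
    case (Suc j)
    define d where "d n = f n (int j + 1) - g n (int j + 1)" for n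
    have "d (n + 1) = d n" for n
      using fr[of n "int j + 1"] gr[of n "int j + 1"] Suc by (simp add: d_def)
    then have "d n = d (int j + 1)" for n by (rule const_int)
    moreover have "d (int j + 1) = 0" using fd gd by (simp add: d_def)
    ultimately show ?case by (auto simp: d_def add.commute)
  qed
  have neg: "\<forall>n. f n (- int j - 1) = g n (- int j - 1)" for j :: nat
  proof (induction j)
    case 0
    show ?case
    proof
      fix n :: int
      show "f n (- int 0 - 1) = g n (- int 0 - 1)"
      proof (cases "n = -1")
        case True then show ?thesis using fd gd by simp
      next
        case False
        then have "(n + 1, 0) \<noteq> (0, 0)" by simp
        from fr[OF this] gr[OF this] f0 g0 Wnz show ?thesis by simp
      qed
    qed
  next
    case (Suc j)
    show ?case
    proof
      fix n :: int
      have ne: "(n + 1, - int j - 1) \<noteq> (0, 0)" by simp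
      have "f n (- int j - 1 - 1) * W (- int j - 1) (n + 1 - (- int j - 1))
          = g n (- int j - 1 - 1) * W (- int j - 1) (n + 1 - (- int j - 1))"
        using fr[OF ne] gr[OF ne] Suc by (metis add_left_cancel)
      then have "f n (- int j - 1 - 1) = g n (- int j - 1 - 1)" using Wnz mult_right_cancel by metis
      then show "f n (- int (Suc j) - 1) = g n (- int (Suc j) - 1)" by (simp add: algebra_simps)
    qed
  qed
  show ?thesis
  proof (intro ext)
    fix n k
    show "f n k = g n k"
      by (rule int_cases_col[of "\<lambda>k. f n k = g n k"]) (use pos neg in auto)
  qed
qed

lemma recC_unique:
  assumes W: "goodW W" and f: "recC W f" and g: "recC W g"
  shows "f = g"
proof -
  have Wnz: "W s t \<noteq> 0" for s t using W by (simp add: goodW_def)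
  have fr: "\<And>n k. (n + 1, k) \<noteq> (0, 0) \<Longrightarrow> f (n + 1) k = f n k + f n (k - 1) * W k (n + 1 - k)"
    and gr: "\<And>n k. (n + 1, k) \<noteq> (0, 0) \<Longrightarrow> g (n + 1) k = g n k + g n (k - 1) * W k (n + 1 - k)"
    and fz: "\<And>n k. inZ n k \<Longrightarrow> f n k = 0" and gz: "\<And>n k. inZ n k \<Longrightarrow> g n k = 0"
    and fa: "f 0 0 = 1" "f (-1) (-1) = 1" "f (-1) 0 = 1"
    and ga: "g 0 0 = 1" "g (-1) (-1) = 1" "g (-1) 0 = 1"
    using f g by (auto simp: recC_def)
  have cm1: "f n (-1) = g n (-1)" for n
  proof (cases "n = -1")
    case True then show ?thesis using fa ga by simp
  next
    case False then have "inZ n (-1)" by (auto simp: inZ_def)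
    then show ?thesis using fz gz by simp
  qed
  have c0: "f n 0 = g n 0" for n
  proof -
    define d where "d n = f n 0 - g n 0" for n
    have "d (n + 1) = d n" if "n \<noteq> -1" for n
    proof -
      have "(n + 1, 0) \<noteq> (0, 0)" using that by simp
      from fr[OF this] gr[OF this] cm1[of n] show ?thesis by (simp add: d_def)
    qed
    then have "d n = 0" by (rule two_sided) (use fa ga in \<open>simp_all add: d_def\<close>)
    then show ?thesis by (simp add: d_def)
  qed
  have pos: "\<forall>n. f n (int j) = g n (int j)" for j :: nat
  proof (induction j)
    case 0 then show ?case using c0 by simp
  next
    case (Suc j)
    define d where "d n = f n (int j + 1) - g n (int j + 1)" for n
    have "d (n + 1) = d n" for n
      using fr[of n "int j + 1"] gr[of n "int j + 1"] Suc by (simp add: d_def)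
    then have "d n = d 0" for n by (rule const_int)
    moreover have "inZ 0 (int j + 1)" by (simp add: inZ_def)
    then have "d 0 = 0" using fz gz by (simp add: d_def)
    ultimately show ?case by (auto simp: d_def add.commute)
  qed
  have neg: "\<forall>n. f n (- int j - 1) = g n (- int j - 1)" for j :: nat
  proof (induction j)
    case 0
    show ?case using cm1 by simp
  next
    case (Suc j)
    show ?case
    proof
      fix n :: int
      have ne: "(n + 1, - int j - 1) \<noteq> (0, 0)" by simp
      have "f n (- int j - 1 - 1) * W (- int j - 1) (n + 1 - (- int j - 1))
          = g n (- int j - 1 - 1) * W (- int j - 1) (n + 1 - (- int j - 1))"
        using fr[OF ne] gr[OF ne] Suc by (metis add_left_cancel)
      then have "f n (- int j - 1 - 1) = g n (- int j - 1 - 1)" using Wnz mult_right_cancel by metis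
      then show "f n (- int (Suc j) - 1) = g n (- int (Suc j) - 1)" by (simp add: algebra_simps)
    qed
  qed
  show ?thesis
  proof (intro ext)
    fix n k
    show "f n k = g n k"
      by (rule int_cases_col[of "\<lambda>k. f n k = g n k"]) (use pos neg in auto)
  qed
qed

lemma recC_recP:
  assumes W: "goodW W" and f: "recC W f"
  shows "recP W f"
proof -
  have W1: "W s 0 = 1" for s using W by (simp add: goodW_def)
  have fr: "\<And>n k. (n + 1, k) \<noteq> (0, 0) \<Longrightarrow> f (n + 1) k = f n k + f n (k - 1) * W k (n + 1 - k)"
    and fz: "\<And>n k. inZ n k \<Longrightarrow> f n k = 0"
    and fa: "f 0 0 = 1" "f (-1) (-1) = 1" "f (-1) 0 = 1"
    using f by (auto simp: recC_def)
  have c0: "f n 0 = 1" for n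
  proof (rule two_sided[where d="\<lambda>n. f n 0"])
    fix n :: int assume "n \<noteq> -1"
    then have "(n + 1, 0) \<noteq> (0, 0)" "inZ n (-1)" by (auto simp: inZ_def)
    then show "f (n + 1) 0 = f n 0" using fr fz by simp
  qed (use fa in auto)
  have dg: "f n n = 1" for n
  proof (rule two_sided[where d="\<lambda>n. f n n"])
    fix n :: int assume "n \<noteq> -1"
    then have "(n + 1, n + 1) \<noteq> (0, 0)" "inZ n (n + 1)" by (auto simp: inZ_def)
    then show "f (n + 1) (n + 1) = f n n" using fr[of n "n+1"] fz W1 by simp
  qed (use fa in auto)
  show ?thesis using c0 dg fr by (simp add: recP_def)
qed

definition Ssum :: "(int \<Rightarrow> complex) \<Rightarrow> int \<Rightarrow> complex" where
  "Ssum A n = (if 0 \<le> n then (\<Sum>i\<in>{0..<n}. A i) else - (\<Sum>i\<in>{n..<0}. A i))"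

lemma Ssum_step: "Ssum A (n + 1) = Ssum A n + A n"
proof -
  consider "0 \<le> n" | "n = -1" | "n < -1" by linarith
  then show ?thesis
  proof cases
    case 1
    then have "{0..<n+1} = insert n {0..<n}" by auto
    then show ?thesis using 1 by (simp add: Ssum_def add.commute)
  next
    case 2
    have "{-1..<0::int} = {-1}" by auto
    with 2 show ?thesis by (simp add: Ssum_def)
  next
    case 3
    then have "{n..<0} = insert n {n+1..<0}" by auto
    then show ?thesis using 3 by (simp add: Ssum_def)
  qed
qed

fun Fp :: "(int \<Rightarrow> int \<Rightarrow> complex) \<Rightarrow> nat \<Rightarrow> int \<Rightarrow> complex" where
  "Fp W 0 n = 1"
| "Fp W (Suc k) n = Ssum (\<lambda>i. Fp W k i * W (int k + 1) (i - int k)) n"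

fun Fm :: "(int \<Rightarrow> int \<Rightarrow> complex) \<Rightarrow> nat \<Rightarrow> int \<Rightarrow> complex" where
  "Fm W 0 n = (if n = -1 then 1 else 0)"
| "Fm W (Suc k) n = (Fm W k (n + 1) - Fm W k n) / W (- int k - 1) (n + int k + 2)"

definition Fc :: "(int \<Rightarrow> int \<Rightarrow> complex) \<Rightarrow> int \<Rightarrow> int \<Rightarrow> complex" where
  "Fc W n k = (if 0 \<le> k then Fp W (nat k) n else Fm W (nat (- k - 1)) n)"

lemma Fp_zero: "0 \<le> n \<Longrightarrow> n < int k \<Longrightarrow> Fp W k n = 0"
proof (induction k arbitrary: n)
  case 0 then show ?case by simp
next
  case (Suc k)
  have "(\<Sum>i\<in>{0..<n}. Fp W k i * W (int k + 1) (i - int k)) = 0"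
    using Suc.IH Suc.prems by (intro sum.neutral) auto
  then show ?case using Suc.prems by (simp add: Ssum_def)
qed

lemma Fm_zero: "n < - int k - 1 \<or> 0 \<le> n \<Longrightarrow> Fm W k n = 0"
  by (induction k arbitrary: n) auto

lemma Fc_recC:
  assumes W: "goodW W"
  shows "recC W (Fc W)"
proof -
  have Wnz: "W s t \<noteq> 0" for s t using W by (simp add: goodW_def)
  have rec: "Fc W (n + 1) k = Fc W n k + Fc W n (k - 1) * W k (n + 1 - k)"
    if ne: "(n + 1, k) \<noteq> (0, 0)" for n k
  proof -
    consider "1 \<le> k" | "k = 0" | "k \<le> -1" by linarith
    then show ?thesis
    proof cases
      case 1
      define j where "j = nat (k - 1)"
      have k: "k = int j + 1" using 1 by (simp add: j_def)
      show ?thesis unfolding k Fc_def using Ssum_step[of "\<lambda>i. Fp W j i * W (int j + 1) (i - int j)" n]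
        by (simp add: nat_add_distrib del: Fp.simps(1) add: Fp.simps(2)[of W j] algebra_simps)
    next
      case 2
      then have "n \<noteq> -1" using ne by auto
      then show ?thesis using 2 by (simp add: Fc_def)
    next
      case 3
      define j where "j = nat (- k - 1)"
      have k: "k = - int j - 1" using 3 by (simp add: j_def)
      have e: "nat (- (k - 1) - 1) = Suc j" using k by simp
      have "Fc W n (k - 1) = Fm W (Suc j) n"
        using 3 e by (simp add: Fc_def)
      also have "\<dots> = (Fm W j (n + 1) - Fm W j n) / W (- int j - 1) (n + int j + 2)"
        by simp
      also have "W (- int j - 1) (n + int j + 2) = W k (n + 1 - k)"
        by (simp add: k algebra_simps)
      finally have "Fc W n (k - 1) * W k (n + 1 - k) = Fm W j (n + 1) - Fm W j n"
        using Wnz by simp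
      moreover have "Fc W m k = Fm W j m" for m using 3 by (simp add: Fc_def j_def)
      ultimately show ?thesis by simp
    qed
  qed
  have z: "Fc W n k = 0" if "inZ n k" for n k
  proof (cases "0 \<le> k")
    case True
    then show ?thesis using that by (auto simp: Fc_def inZ_def intro!: Fp_zero)
  next
    case False
    then show ?thesis using that by (auto simp: Fc_def inZ_def intro!: Fm_zero)
  qed
  show ?thesis using rec z by (simp add: recC_def Fc_def)
qed

definition E :: "(int \<Rightarrow> int \<Rightarrow> complex) \<Rightarrow> int \<Rightarrow> int \<Rightarrow> complex" where
  "E W = (THE f. recP W f)"

lemma E_eq: assumes "goodW W" shows "E W = Fc W"
  unfolding E_def
  using assms Fc_recC recC_recP recP_unique by (intro the_equality) blast+

lemma E_props: assumes "goodW W" shows "recP W (E W)" "recC W (E W)"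
  using assms E_eq Fc_recC recC_recP by auto

lemma E_unique: assumes "goodW W" "recC W g" shows "g = E W"
  using assms E_props recC_unique by blast

lemma ebinom_E: "ebinom a b q p = E (eW a b q p)"
  by (simp add: ebinom_def E_def recP_def)




lemma powi_neg': "m = - n \<Longrightarrow> (q::complex) powi m = inverse (q powi n)"
  by (simp add: power_int_minus)

lemma powi_add': "(q::complex) \<noteq> 0 \<Longrightarrow> m = n + k \<Longrightarrow> q powi m = q powi n * q powi k"
  by (simp add: power_int_add)

lemma alg1:
  fixes X1 X2 Y1 Y2 T1 T2 T3 T4 x q :: complex
  assumes "X1 \<noteq> 0" "X2 \<noteq> 0" "Y1 \<noteq> 0" "Y2 \<noteq> 0" "T1 \<noteq> 0" "T2 \<noteq> 0" "x \<noteq> 0" "q \<noteq> 0"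
    and "T3 = - T2 / (x * q^2)" "T4 = - T1 / x"
  shows "X1 * X2 * T1 / (Y1 * Y2 * T2) * q * (Y2 * Y1 * T3 / (X2 * X1 * T4) * q) = 1"
  unfolding assms(9,10) using assms(1-8) by (simp add: field_simps power2_eq_square)

lemma alg2:
  fixes N1 N2 N3 D1 D2 D3 P2 P5 y1 q :: complex
  assumes "N1 \<noteq> 0" "N2 \<noteq> 0" "N3 \<noteq> 0" "D1 \<noteq> 0" "D2 \<noteq> 0" "D3 \<noteq> 0" "y1 \<noteq> 0" "q \<noteq> 0"
    and "P2 = - D2 / (y1 * q^2)" "P5 = - N2 / y1"
  shows "D3 * P2 * D1 / (N3 * P5 * N1) * q = inverse (N1 * N2 * N3 / (D1 * D2 * D3) * q)"
  unfolding assms(9,10) using assms(1-8) by (simp add: field_simps power2_eq_square)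

lemma alg3:
  fixes N1 N2 N3 D1 D2 D3 L1 L2 L3 M1 M2 M3 u v w q :: complex
  assumes "N1 \<noteq> 0" "N2 \<noteq> 0" "N3 \<noteq> 0" "D1 \<noteq> 0" "D2 \<noteq> 0" "D3 \<noteq> 0"
    "u \<noteq> 0" "v \<noteq> 0" "w \<noteq> 0" "q \<noteq> 0"
    and "L1 = - D1 / u" "L2 = - D3 / (v * q^2)" "L3 = - D2 / (w * q^2)"
    and "M1 = - N1 / (u * q^2)" "M2 = - N3 / v" "M3 = - N2 / w"
  shows "L1 * L2 * L3 / (M1 * M2 * M3) * q = inverse (N1 * N2 * N3 / (D1 * D2 * D3) * q)"
  unfolding assms(11-16) using assms(1-10) by (simp add: field_simps power2_eq_square)

locale ctx =
  fixes a b q p :: complex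
  assumes p1: "norm p < 1"
    and a0: "a \<noteq> 0" and b0: "b \<noteq> 0" and q0: "q \<noteq> 0"
    and ta: "\<And>m::int. etheta (a * q powi m) p \<noteq> 0"
    and tb: "\<And>m::int. etheta (b * q powi m) p \<noteq> 0"
    and tab: "\<And>m::int. etheta (a * q powi m / b) p \<noteq> 0"
    and tba: "\<And>m::int. etheta (b * q powi m / a) p \<noteq> 0"
begin

lemma thinv: "x \<noteq> 0 \<Longrightarrow> y = 1 / x \<Longrightarrow> etheta y p = - etheta x p / x"
  using theta_inv[OF p1] by simp

lemma qpow_nz: "q powi m \<noteq> 0" using q0 by simp

lemma ew_nz: "ew a b q p s t \<noteq> 0"
  unfolding ew_def using ta tb tab q0 by simp

lemma W1: "ew a b q p s t * ew b a q p t s = 1"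
proof -
  define x where "x = a * q powi (t - s - 1) / b"
  have x0: "x \<noteq> 0" using a0 b0 q0 by (simp add: x_def)
  have e1: "a * q powi (t - s + 1) / b = x * q^2"
    unfolding x_def using powi_add'[OF q0, of "t - s + 1" "t - s - 1" 2] by simp
  have e2: "b * q powi (s - t - 1) / a = 1 / (x * q^2)"
    unfolding e1[symmetric] using powi_neg'[of "s - t - 1" "t - s + 1" q] a0 b0 q0
    by (simp add: field_simps)
  have e3: "b * q powi (s - t + 1) / a = 1 / x"
    unfolding x_def using powi_neg'[of "s - t + 1" "t - s - 1" q] a0 b0 q0
    by (simp add: field_simps)
  have T3: "etheta (b * q powi (s - t - 1) / a) p = - etheta (x * q^2) p / (x * q^2)"
    by (rule thinv) (use x0 q0 e2 in auto)
  have T4: "etheta (b * q powi (s - t + 1) / a) p = - etheta x p / x"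
    by (rule thinv) (use x0 e3 in auto)
  have i1: "t + 2 * s = 2 * s + t" "2 * t + s - 2 = s + 2 * t - 2" "t + 2 * s - 2 = 2 * s + t - 2"
     "2 * t + s = s + 2 * t" by simp_all
  have A: "ew a b q p s t = etheta (a * q powi (s + 2 * t)) p * etheta (b * q powi (2 * s + t - 2)) p * etheta x p
       / (etheta (a * q powi (s + 2 * t - 2)) p * etheta (b * q powi (2 * s + t)) p * etheta (x * q^2) p) * q"
    unfolding ew_def x_def[symmetric] e1 ..
  have B: "ew b a q p t s = etheta (b * q powi (2 * s + t)) p * etheta (a * q powi (s + 2 * t - 2)) p * etheta (b * q powi (s - t - 1) / a) p
       / (etheta (b * q powi (2 * s + t - 2)) p * etheta (a * q powi (s + 2 * t)) p * etheta (b * q powi (s - t + 1) / a) p) * q"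
    unfolding ew_def i1 ..
  have T1nz: "etheta x p \<noteq> 0" unfolding x_def by (rule tab)
  have T2nz: "etheta (x * q^2) p \<noteq> 0" using tab[of "t - s + 1"] unfolding e1 .
  show ?thesis unfolding A B
    by (rule alg1[OF ta tb ta tb T1nz T2nz x0 q0 T3 T4])
qed


lemma W2: "ew (a / b) (1 / b) q p s t = inverse (ew a b q p (1 - s - t) t)"
proof -
  define y1 where "y1 = b * q powi (- 2 * s - t)"
  have y0: "y1 \<noteq> 0" using b0 q0 by (simp add: y1_def)
  have ey: "b * q powi (2 - 2 * s - t) = y1 * q^2"
    unfolding y1_def using powi_add'[OF q0, of "2 - 2 * s - t" "- 2 * s - t" 2] by simp
  have f1: "1 / b * q powi (2 * s + t - 2) = 1 / (y1 * q^2)"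
    unfolding ey[symmetric] using powi_neg'[of "2 * s + t - 2" "2 - 2 * s - t" q] b0 q0
    by (simp add: field_simps)
  have f2: "1 / b * q powi (2 * s + t) = 1 / y1"
    unfolding y1_def using powi_neg'[of "2 * s + t" "- 2 * s - t" q] b0 q0
    by (simp add: field_simps)
  have P2: "etheta (1 / b * q powi (2 * s + t - 2)) p = - etheta (b * q powi (2 - 2 * s - t)) p / (y1 * q^2)"
    unfolding ey by (rule thinv) (use y0 q0 f1 in auto)
  have P5: "etheta (1 / b * q powi (2 * s + t)) p = - etheta (b * q powi (- 2 * s - t)) p / y1"
    unfolding y1_def[symmetric] by (rule thinv) (use y0 f2 in auto)
  have i1: "1 - s - t + 2 * t = t - s + 1" "2 * (1 - s - t) + t - 2 = - 2 * s - t"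
    "t - (1 - s - t) - 1 = s + 2 * t - 2" "1 - s - t + 2 * t - 2 = t - s - 1"
    "2 * (1 - s - t) + t = 2 - 2 * s - t" "t - (1 - s - t) + 1 = s + 2 * t"
    "t - s + 1 - 2 = t - s - 1" "2 - 2 * s - t - 2 = - 2 * s - t" by simp_all
  have j: "\<And>m. a / b * q powi m = a * q powi m / b" "\<And>m. a / b * q powi m / (1 / b) = a * q powi m"
    "\<And>m. a * q powi m / b / (1 / b) = a * q powi m"
    using b0 by simp_all
  have A: "ew (a / b) (1 / b) q p s t = etheta (a * q powi (s + 2 * t) / b) p * etheta (1 / b * q powi (2 * s + t - 2)) p * etheta (a * q powi (t - s - 1)) p
    / (etheta (a * q powi (s + 2 * t - 2) / b) p * etheta (1 / b * q powi (2 * s + t)) p * etheta (a * q powi (t - s + 1)) p) * q"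
    unfolding ew_def j ..
  have B: "ew a b q p (1 - s - t) t = etheta (a * q powi (t - s + 1)) p * etheta (b * q powi (- 2 * s - t)) p * etheta (a * q powi (s + 2 * t - 2) / b) p
    / (etheta (a * q powi (t - s - 1)) p * etheta (b * q powi (2 - 2 * s - t)) p * etheta (a * q powi (s + 2 * t) / b) p) * q"
    unfolding ew_def i1 ..
  show ?thesis unfolding A B
    by (rule alg2[OF ta tb tab ta tb tab y0 q0 P2 P5])
qed

lemma W3: "ew (1 / a) (b / a) q p s t = inverse (ew a b q p s (1 - s - t))"
proof -
  define u where "u = a * q powi (- s - 2 * t)"
  define v where "v = a * q powi (- 2 * s - t) / b"
  define w where "w = b * q powi (s - t - 1)"
  have u0: "u \<noteq> 0" and v0: "v \<noteq> 0" and w0: "w \<noteq> 0" using a0 b0 q0 by (simp_all add: u_def v_def w_def)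
  have eu: "a * q powi (2 - s - 2 * t) = u * q^2"
    unfolding u_def using powi_add'[OF q0, of "2 - s - 2 * t" "- s - 2 * t" 2] by simp
  have ev: "a * q powi (2 - 2 * s - t) / b = v * q^2"
    unfolding v_def using powi_add'[OF q0, of "2 - 2 * s - t" "- 2 * s - t" 2] by simp
  have ew': "b * q powi (s - t + 1) = w * q^2"
    unfolding w_def using powi_add'[OF q0, of "s - t + 1" "s - t - 1" 2] by simp
  have g1: "1 / a * q powi (s + 2 * t) = 1 / u"
    unfolding u_def using powi_neg'[of "s + 2 * t" "- s - 2 * t" q] a0 q0 by (simp add: field_simps)
  have g2: "b / a * q powi (2 * s + t - 2) = 1 / (v * q^2)"
    unfolding ev[symmetric] using powi_neg'[of "2 * s + t - 2" "2 - 2 * s - t" q] a0 b0 q0 by (simp add: field_simps)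
  have g3: "1 / a * q powi (t - s - 1) / (b / a) = 1 / (w * q^2)"
    unfolding ew'[symmetric] using powi_neg'[of "t - s - 1" "s - t + 1" q] a0 b0 q0 by (simp add: field_simps)
  have g4: "1 / a * q powi (s + 2 * t - 2) = 1 / (u * q^2)"
    unfolding eu[symmetric] using powi_neg'[of "s + 2 * t - 2" "2 - s - 2 * t" q] a0 q0 by (simp add: field_simps)
  have g5: "b / a * q powi (2 * s + t) = 1 / v"
    unfolding v_def using powi_neg'[of "2 * s + t" "- 2 * s - t" q] a0 b0 q0 by (simp add: field_simps)
  have g6: "1 / a * q powi (t - s + 1) / (b / a) = 1 / w"
    unfolding w_def using powi_neg'[of "t - s + 1" "s - t - 1" q] a0 b0 q0 by (simp add: field_simps)
  have L1: "etheta (1 / a * q powi (s + 2 * t)) p = - etheta (a * q powi (- s - 2 * t)) p / u"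
    unfolding u_def[symmetric] by (rule thinv) (use u0 g1 in auto)
  have L2: "etheta (b / a * q powi (2 * s + t - 2)) p = - etheta (a * q powi (2 - 2 * s - t) / b) p / (v * q^2)"
    unfolding ev by (rule thinv) (use v0 q0 g2 in auto)
  have L3: "etheta (1 / a * q powi (t - s - 1) / (b / a)) p = - etheta (b * q powi (s - t + 1)) p / (w * q^2)"
    unfolding ew' by (rule thinv) (use w0 q0 g3 in auto)
  have M1: "etheta (1 / a * q powi (s + 2 * t - 2)) p = - etheta (a * q powi (2 - s - 2 * t)) p / (u * q^2)"
    unfolding eu by (rule thinv) (use u0 q0 g4 in auto)
  have M2: "etheta (b / a * q powi (2 * s + t)) p = - etheta (a * q powi (- 2 * s - t) / b) p / v"
    unfolding v_def[symmetric] by (rule thinv) (use v0 g5 in auto)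
  have M3: "etheta (1 / a * q powi (t - s + 1) / (b / a)) p = - etheta (b * q powi (s - t - 1)) p / w"
    unfolding w_def[symmetric] by (rule thinv) (use w0 g6 in auto)
  have i1: "s + 2 * (1 - s - t) = 2 - s - 2 * t" "2 * s + (1 - s - t) - 2 = s - t - 1"
    "1 - s - t - s - 1 = - 2 * s - t" "s + 2 * (1 - s - t) - 2 = - s - 2 * t"
    "2 * s + (1 - s - t) = s - t + 1" "1 - s - t - s + 1 = 2 - 2 * s - t"
    "s - t + 1 - 2 = s - t - 1" "2 - s - 2 * t - 2 = - s - 2 * t" by simp_all
  have B: "ew a b q p s (1 - s - t) = etheta (a * q powi (2 - s - 2 * t)) p * etheta (b * q powi (s - t - 1)) p * etheta (a * q powi (- 2 * s - t) / b) p
    / (etheta (a * q powi (- s - 2 * t)) p * etheta (b * q powi (s - t + 1)) p * etheta (a * q powi (2 - 2 * s - t) / b) p) * q"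
    unfolding ew_def i1 ..
  show ?thesis unfolding B ew_def[of "1 / a"]
    by (rule alg3[OF ta tb tab ta tb tab u0 v0 w0 q0 L1 L2 L3 M1 M2 M3])
qed

end



lemma E_rec: "goodW W \<Longrightarrow> (n + 1, k) \<noteq> (0, 0) \<Longrightarrow> E W (n + 1) k = E W n k + E W n (k - 1) * W k (n + 1 - k)"
  using E_props(1) by (simp add: recP_def)
lemma E_Z: "goodW W \<Longrightarrow> inZ n k \<Longrightarrow> E W n k = 0"
  using E_props(2) by (simp add: recC_def)
lemma E_col0: "goodW W \<Longrightarrow> E W n 0 = 1"
  using E_props(1) by (simp add: recP_def)
lemma E_diag: "goodW W \<Longrightarrow> E W n n = 1"
  using E_props(1) by (simp add: recP_def)

context ctx
begin

abbreviation "Wab \<equiv> eW a b q p"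

lemma good_gen: "(\<And>s t. ew a' b' q p s t \<noteq> 0) \<Longrightarrow> goodW (eW a' b' q p)"
  unfolding goodW_def eW_def by (auto intro!: cprod_nz simp: cprod_def)

lemma good_ab: "goodW (eW a b q p)" by (rule good_gen) (rule ew_nz)
lemma good_ba: "goodW (eW b a q p)"
  by (rule good_gen) (metis W1 mult_zero_right zero_neq_one)
lemma good_2: "goodW (eW (a / b) (1 / b) q p)"
  by (rule good_gen) (simp add: W2 ew_nz)
lemma good_3: "goodW (eW (1 / a) (b / a) q p)"
  by (rule good_gen) (simp add: W3 ew_nz)

lemma Wab_nz: "Wab s t \<noteq> 0" using good_ab by (simp add: goodW_def)
lemma Wab_0: "Wab s 0 = 1" by (simp add: eW_def cprod_def)

lemma eW_step: "Wab s t = Wab s (t - 1) * ew a b q p s t"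
  unfolding eW_def by (rule cprod_step) (rule ew_nz)


definition g1 :: "int \<Rightarrow> int \<Rightarrow> complex" where
  "g1 n k = E (eW b a q p) n (n - k) * cprod (\<lambda>j. Wab j (n - k)) 1 k"

lemma g1_recC: "recC Wab g1"
proof -
  let ?B = "E (eW b a q p)"
  let ?P = "\<lambda>n k. cprod (\<lambda>j. Wab j (n - k)) 1 k"
  have rec: "g1 (n + 1) k = g1 n k + g1 n (k - 1) * Wab k (n + 1 - k)"
    if ne: "(n + 1, k) \<noteq> (0, 0)" for n k
  proof -
    have ne': "(n + 1, n - k + 1) \<noteq> (0, 0)" using ne by auto
    have rB: "?B (n + 1) (n - k + 1) = ?B n (n - k + 1) + ?B n (n - k) * eW b a q p (n - k + 1) k"
      using E_rec[OF good_ba ne'] by (simp add: algebra_simps)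
    have PA: "?P (n + 1) k = ?P n (k - 1) * Wab k (n + 1 - k)"
      using cprod_step[of "\<lambda>j. Wab j (n + 1 - k)" 1 k] Wab_nz by (simp add: algebra_simps)
    have PB: "?P (n + 1) k * eW b a q p (n - k + 1) k = ?P n k"
    proof -
      have "?P (n + 1) k = cprod (\<lambda>j. Wab j (n - k) * ew a b q p j (n - k + 1)) 1 k"
        using eW_step[of _ "n - k + 1"] by (simp add: algebra_simps)
      also have "\<dots> = ?P n k * cprod (\<lambda>j. ew a b q p j (n - k + 1)) 1 k"
        by (rule cprod_mult)
      finally have "?P (n + 1) k * eW b a q p (n - k + 1) k
          = ?P n k * (cprod (\<lambda>j. ew a b q p j (n - k + 1)) 1 k * cprod (\<lambda>j. ew b a q p (n - k + 1) j) 1 k)"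
        by (simp add: eW_def)
      also have "cprod (\<lambda>j. ew a b q p j (n - k + 1)) 1 k * cprod (\<lambda>j. ew b a q p (n - k + 1) j) 1 k = 1"
        using cprod_mult[symmetric, where A="\<lambda>j. ew a b q p j (n - k + 1)" and B="\<lambda>j. ew b a q p (n - k + 1) j" and l=1 and m=k]
        by (simp add: W1 cprod_one)
      finally show ?thesis by simp
    qed
    have "g1 (n + 1) k = ?B (n + 1) (n - k + 1) * ?P (n + 1) k"
      by (simp add: g1_def algebra_simps)
    also have "\<dots> = ?B n (n - k + 1) * (?P n (k - 1) * Wab k (n + 1 - k)) + ?B n (n - k) * ?P n k"
      unfolding rB distrib_right PA[symmetric] PB[symmetric] by (simp add: algebra_simps)
    also have "\<dots> = g1 n k + g1 n (k - 1) * Wab k (n + 1 - k)"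
      by (simp add: g1_def algebra_simps)
    finally show ?thesis .
  qed
  have z: "g1 n k = 0" if "inZ n k" for n k
  proof -
    have "inZ n (n - k)" using that by (auto simp: inZ_def)
    then show ?thesis using E_Z[OF good_ba] by (simp add: g1_def)
  qed
  have a1: "g1 0 0 = 1" using E_diag[OF good_ba, of 0] by (simp add: g1_def cprod_def)
  have a2: "g1 (-1) (-1) = 1" using E_col0[OF good_ba, of "-1"] by (simp add: g1_def cprod_def Wab_0)
  have a3: "g1 (-1) 0 = 1" using E_diag[OF good_ba, of "-1"] by (simp add: g1_def cprod_def)
  show ?thesis using rec z a1 a2 a3 by (simp add: recC_def)
qed

lemma ident1: "ebinom a b q p n k = ebinom b a q p n (n - k) * cprod (\<lambda>j. eW a b q p j (n - k)) 1 k"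
  using E_unique[OF good_ab g1_recC, symmetric] by (simp add: ebinom_E g1_def)

end

lemma eps_step: "m \<noteq> -1 \<Longrightarrow> (-1::complex) powi (m + 1) * isgn (m + 1) = - ((-1) powi m * isgn m)"
  by (auto simp: isgn_def power_int_add)

lemma eps_m1: "(-1::complex) powi (-1) * isgn (-1) = 1"
  by (simp add: isgn_def power_int_minus)

lemma eps_0: "(-1::complex) powi 0 * isgn 0 = 1"
  by (simp add: isgn_def)

lemma alg_g: 
  fixes e0 e1 A Bv C Qn Qn1 Qk w v :: complex
  assumes "Bv = C + A * w" "Qn1 = Qn * w" "Qk * v = Qn" "e1 = - e0"
  shows "e1 * A * Qn1 = e0 * C * Qn + e1 * Bv * Qk * v"
proof -
  have "e1 * Bv * Qk * v = e1 * Bv * (Qk * v)" by (simp add: mult.assoc)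
  then show ?thesis using assms by (simp add: algebra_simps)
qed

context ctx
begin

definition Q2 :: "int \<Rightarrow> int \<Rightarrow> complex" where
  "Q2 n k = cprod (\<lambda>j. inverse (Wab (n + 1 - j) j)) 1 (n - k)"

definition g2 :: "int \<Rightarrow> int \<Rightarrow> complex" where
  "g2 n k = (-1) powi (n - k) * isgn (n - k) * E (eW (a / b) (1 / b) q p) (- k - 1) (- n - 1) * Q2 n k"

lemma Q2_I: "Q2 (n + 1) k = Q2 n k * eW (a / b) (1 / b) q p (- n - 1) (n - k + 1)"
proof -
  have eq: "inverse (Wab (n + 1 + 1 - j) j) = inverse (Wab (n + 2 - j) (j - 1)) * inverse (ew a b q p (n + 2 - j) j)" for j
    using eW_step[of "n + 2 - j" j] by (simp add: algebra_simps)
  have "Q2 (n + 1) k = cprod (\<lambda>j. inverse (Wab (n + 2 - j) (j - 1)) * inverse (ew a b q p (n + 2 - j) j)) 1 (n - k + 1)"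
    unfolding Q2_def eq by (simp add: algebra_simps)
  also have "\<dots> = cprod (\<lambda>j. inverse (Wab (n + 2 - j) (j - 1))) 1 (n - k + 1) * cprod (\<lambda>j. inverse (ew a b q p (n + 2 - j) j)) 1 (n - k + 1)"
    by (rule cprod_mult)
  also have "cprod (\<lambda>j. inverse (ew a b q p (n + 2 - j) j)) 1 (n - k + 1) = eW (a / b) (1 / b) q p (- n - 1) (n - k + 1)"
    unfolding eW_def W2 by (simp add: algebra_simps)
  also have "cprod (\<lambda>j. inverse (Wab (n + 2 - j) (j - 1))) 1 (n - k + 1) = cprod (\<lambda>j. inverse (Wab (n + 1 - j) j)) 0 (n - k)"
    by (subst cprod_shift) (simp add: algebra_simps)
  also have "\<dots> = Q2 n k"
    unfolding Q2_def by (subst cprod_first) (simp_all add: Wab_nz Wab_0)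
  finally show ?thesis .
qed

lemma Q2_II: "Q2 n (k - 1) * Wab k (n - k + 1) = Q2 n k"
proof -
  have "Q2 n (k - 1) = Q2 n k * inverse (Wab k (n - k + 1))"
    unfolding Q2_def using cprod_step[where A="\<lambda>j. inverse (Wab (n + 1 - j) j)" and l=1 and m="n - k + 1"] Wab_nz
    by (simp add: algebra_simps)
  then show ?thesis using Wab_nz by simp
qed

lemma g2_Z: "inZ n k \<Longrightarrow> g2 n k = 0"
proof -
  assume "inZ n k"
  then have "inZ (- k - 1) (- n - 1)" by (auto simp: inZ_def)
  then show ?thesis using E_Z[OF good_2] by (simp add: g2_def)
qed

lemma g2_recC: "recC Wab g2"
proof -
  let ?E = "E (eW (a / b) (1 / b) q p)"
  have rec: "g2 (n + 1) k = g2 n k + g2 n (k - 1) * Wab k (n + 1 - k)"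
    if ne: "(n + 1, k) \<noteq> (0, 0)" for n k
  proof (cases "n - k = -1")
    case True
    then have k: "k = n + 1" by simp
    then have "n \<noteq> -1" using ne by simp
    then have "inZ n (n + 1)" by (auto simp: inZ_def)
    then have "g2 n (n + 1) = 0" by (rule g2_Z)
    moreover have "g2 (n + 1) (n + 1) = 1" "g2 n n = 1"
      using E_diag[OF good_2] by (simp_all add: g2_def Q2_def cprod_def isgn_def)
    ultimately show ?thesis using k by (simp add: Wab_0)
  next
    case False
    have ne': "(- k - 1 + 1, - n - 1) \<noteq> (0, 0)" using ne by auto
    have rE: "?E (- k) (- n - 1) = ?E (- k - 1) (- n - 1) + ?E (- k - 1) (- n - 1 - 1) * eW (a / b) (1 / b) q p (- n - 1) (n - k + 1)"
      using E_rec[OF good_2 ne'] by (simp add: algebra_simps)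
    have "(-1::complex) powi (n - k + 1) * isgn (n - k + 1) * ?E (- k - 1) (- n - 1 - 1) * Q2 (n + 1) k
      = (-1) powi (n - k) * isgn (n - k) * ?E (- k - 1) (- n - 1) * Q2 n k
       + (-1::complex) powi (n - k + 1) * isgn (n - k + 1) * ?E (- k) (- n - 1) * Q2 n (k - 1) * Wab k (n - k + 1)"
      by (rule alg_g[OF rE Q2_I Q2_II eps_step[OF False]])
    then show ?thesis by (simp add: g2_def algebra_simps)
  qed
  have a1: "g2 0 0 = 1" using E_diag[OF good_2, of "-1"] by (simp add: g2_def Q2_def cprod_def isgn_def)
  have a2: "g2 (-1) (-1) = 1" using E_diag[OF good_2, of 0] by (simp add: g2_def Q2_def cprod_def isgn_def)
  have a3: "g2 (-1) 0 = 1" using E_col0[OF good_2, of "-1"] eps_m1 by (simp add: g2_def Q2_def cprod_def Wab_0)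
  show ?thesis using rec g2_Z a1 a2 a3 by (simp add: recC_def)
qed

lemma ident2: "ebinom a b q p n k = (-1) powi (n - k) * isgn (n - k) * ebinom (a / b) (1 / b) q p (-k - 1) (-n - 1)
             * cprod (\<lambda>j. inverse (eW a b q p (n + 1 - j) j)) 1 (n - k)"
  using E_unique[OF good_ab g2_recC, symmetric] by (simp add: ebinom_E g2_def Q2_def)

end

lemma alg_g3:
  fixes e0 e1 A Bv C Rk Rk1 u w v :: complex
  assumes "C = A + Bv * w" "Rk = Rk1 * u" "u * w = v" "e1 = - e0"
  shows "e0 * A * Rk = e0 * C * Rk + e1 * Bv * Rk1 * v"
  unfolding assms(1,2,4) assms(3)[symmetric] by (simp add: algebra_simps)

context ctx
begin

definition R3 :: "int \<Rightarrow> complex" where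
  "R3 k = cprod (\<lambda>j. Wab j (- j)) 1 k"

definition g3 :: "int \<Rightarrow> int \<Rightarrow> complex" where
  "g3 n k = (-1) powi k * isgn k * E (eW (1 / a) (b / a) q p) (k - n - 1) k * R3 k"

lemma refl3: "Wab k (- k) * eW (1 / a) (b / a) q p k (- n - 1) = Wab k (n + 1 - k)"
proof -
  have "eW (1 / a) (b / a) q p k (- n - 1) = cprod (\<lambda>j. inverse (ew a b q p k (- k + 1 - j))) 1 (- n - 1)"
    unfolding eW_def W3 by (simp add: algebra_simps)
  moreover have "Wab k (n + 1 - k) = cprod (ew a b q p k) 1 (- k - (- n - 1))"
    unfolding eW_def by (simp add: algebra_simps)
  ultimately show ?thesis
    using cprod_reflect[where u="ew a b q p k" and c="- k" and T="- n - 1"] ew_nz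
    by (simp add: eW_def)
qed

lemma g3_Z: "inZ n k \<Longrightarrow> g3 n k = 0"
proof -
  assume "inZ n k"
  then have "inZ (k - n - 1) k" by (auto simp: inZ_def)
  then show ?thesis using E_Z[OF good_3] by (simp add: g3_def)
qed

lemma g3_recC: "recC Wab g3"
proof -
  let ?E = "E (eW (1 / a) (b / a) q p)"
  have rec: "g3 (n + 1) k = g3 n k + g3 n (k - 1) * Wab k (n + 1 - k)"
    if ne: "(n + 1, k) \<noteq> (0, 0)" for n k
  proof (cases "k = 0")
    case True
    then have "n \<noteq> -1" using ne by simp
    then have "inZ n (-1)" by (auto simp: inZ_def)
    then have "g3 n (-1) = 0" by (rule g3_Z)
    moreover have "g3 (n + 1) 0 = 1" "g3 n 0 = 1"
      using E_col0[OF good_3] by (simp_all add: g3_def R3_def cprod_def isgn_def)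
    ultimately show ?thesis using True by simp
  next
    case False
    have ne': "(k - n - 1 - 1 + 1, k) \<noteq> (0, 0)" using False by auto
    have rE: "?E (k - n - 1) k = ?E (k - n - 1 - 1) k + ?E (k - n - 1 - 1) (k - 1) * eW (1 / a) (b / a) q p k (- n - 1)"
    proof -
      have e1: "k - n - 1 - 1 + 1 = k - n - 1" and e3: "k - n - 1 - k = - n - 1" by simp_all
      show ?thesis using E_rec[OF good_3 ne'] by (simp only: e1 e3)
    qed
    have Rs: "R3 k = R3 (k - 1) * Wab k (- k)"
      unfolding R3_def by (rule cprod_step) (rule Wab_nz)
    have ep: "(-1::complex) powi (k - 1) * isgn (k - 1) = - ((-1) powi k * isgn k)"
      using eps_step[of "k - 1"] False by simp
    have "(-1::complex) powi k * isgn k * ?E (k - n - 1 - 1) k * R3 k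
      = (-1) powi k * isgn k * ?E (k - n - 1) k * R3 k
       + (-1::complex) powi (k - 1) * isgn (k - 1) * ?E (k - n - 1 - 1) (k - 1) * R3 (k - 1) * Wab k (n + 1 - k)"
      by (rule alg_g3[OF rE Rs refl3 ep])
    then show ?thesis by (simp add: g3_def algebra_simps)
  qed
  have a1: "g3 0 0 = 1" using E_col0[OF good_3, of "-1"] by (simp add: g3_def R3_def cprod_def isgn_def)
  have a2: "g3 (-1) (-1) = 1" using E_diag[OF good_3, of "-1"] eps_m1 by (simp add: g3_def R3_def cprod_def Wab_0)
  have a3: "g3 (-1) 0 = 1" using E_diag[OF good_3, of 0] by (simp add: g3_def R3_def cprod_def isgn_def)
  show ?thesis using rec g3_Z a1 a2 a3 by (simp add: recC_def)
qed

lemma ident3: "ebinom a b q p n k = (-1) powi k * isgn k * ebinom (1 / a) (b / a) q p (k - n - 1) k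
             * cprod (\<lambda>j. eW a b q p j (-j)) 1 k"
  using E_unique[OF good_ab g3_recC, symmetric] by (simp add: ebinom_E g3_def R3_def)

end

theorem corollary3:
  fixes a b q p :: complex and n k :: int
  assumes "norm p < 1"
    and "a \<noteq> 0" and "b \<noteq> 0" and "q \<noteq> 0"
    and "\<And>m::int. etheta (a * q powi m) p \<noteq> 0"
    and "\<And>m::int. etheta (b * q powi m) p \<noteq> 0"
    and "\<And>m::int. etheta (a * q powi m / b) p \<noteq> 0"
    and "\<And>m::int. etheta (b * q powi m / a) p \<noteq> 0"
    and "\<And>m::int. m \<noteq> 0 \<Longrightarrow> etheta (q powi m) p \<noteq> 0"
  shows "ebinom a b q p n k
           = ebinom b a q p n (n - k) * cprod (\<lambda>j. eW a b q p j (n - k)) 1 k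
       \<and> ebinom a b q p n k
           = (-1) powi (n - k) * isgn (n - k) * ebinom (a / b) (1 / b) q p (-k - 1) (-n - 1)
             * cprod (\<lambda>j. inverse (eW a b q p (n + 1 - j) j)) 1 (n - k)
       \<and> ebinom a b q p n k
           = (-1) powi k * isgn k * ebinom (1 / a) (b / a) q p (k - n - 1) k
             * cprod (\<lambda>j. eW a b q p j (-j)) 1 k"
proof -
  interpret ctx a b q p using assms(1-8) by unfold_locales auto
  show ?thesis using ident1 ident2 ident3 by blast
qed

end
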